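(* Let $\hslash\in\mathbb{R}$ and let $a\in A_\hslash^\infty$. Then the commutator \[\left[\begin{bmatrix}\pi_\hslash(a)&0\\0&\pi_\hslash(a)\end{bmatrix},\ D\right],\qquad D=\begin{bmatrix}0&x-\frac{d}{dx}\\ x+\frac{d}{dx}&0\end{bmatrix},\] defined on $\mathcal{S}(\mathbb{R})\oplus\mathcal{S}(\mathbb{R})$, extends to a bounded operator on $L^2(\mathbb{R})\oplus L^2(\mathbb{R})$.
   Context: $\mathbb{T}=\mathbb{R}/\mathbb{Z}$. For $\hslash\in\mathbb{R}$, $A_\hslash=C(\mathbb{T})\rtimes_\hslash\mathbb{Z}$ is the crossed product C*-algebra for the action of $\mathbb{Z}$ on $\mathbb{T}$ generated by translation by $\hslash$ mod $\mathbb{Z}$; it is generated by unitaries $U$ (the function $U(t)=e^{2\pi i t}$) and $V$ (the generator of $\mathbb{Z}$), with $UV=e^{-2\pi i\hslash}VU$. The Schwartz subalgebra is $A_\hslash^\infty=\{\sum_{n,m}a_{nm}U^nV^m:\ \sum|a_{nm}|(1+n^2+m^2)^k<\infty\ \forall k\}$. The representation $\pi_\hslash:A_\hslash\to\mathbb{B}(L^2(\mathbb{R}))$ lets $f\in C(\mathbb{T})$ act as multiplication by $f$ regarded as a $1$-periodic function on $\mathbb{R}$, and $V$ act by $(V\xi)(x)=\xi(x-\hslash)$. $\mathcal{S}(\mathbb{R})$ is the Schwartz space; $x$ denotes the multiplication operator by the coordinate. *)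

theory Defs
  imports "HOL-Analysis.Analysis"
begin

definition vderiv :: "(real \<Rightarrow> complex) \<Rightarrow> real \<Rightarrow> complex" where
  "vderiv f = (\<lambda>x. vector_derivative f (at x))"

definition schwartz :: "(real \<Rightarrow> complex) \<Rightarrow> bool" where
  "schwartz f \<longleftrightarrow>
     (\<forall>n x. ((vderiv ^^ n) f) differentiable (at x)) \<and>
     (\<forall>k n. bounded (range (\<lambda>x. (complex_of_real x) ^ k * (vderiv ^^ n) f x)))"

text \<open>Coefficient arrays (a_nm) of elements a = sum a_nm U^n V^m of the smooth algebra A_h^infty.\<close>
definition rapid_decay :: "(int \<Rightarrow> int \<Rightarrow> complex) \<Rightarrow> bool" where
  "rapid_decay c \<longleftrightarrow>
     (\<forall>k::nat. (\<lambda>(n, m). norm (c n m) * (1 + (real_of_int n)^2 + (real_of_int m)^2) ^ k)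
                 summable_on UNIV)"

text \<open>pi_h(sum a_nm U^n V^m): U acts by multiplication by exp(2 pi i x), V by translation by h.\<close>
definition pi_rep :: "real \<Rightarrow> (int \<Rightarrow> int \<Rightarrow> complex) \<Rightarrow> (real \<Rightarrow> complex) \<Rightarrow> real \<Rightarrow> complex" where
  "pi_rep h c \<xi> x =
     infsum (\<lambda>(n, m). c n m * exp (2 * of_real pi * \<i> * of_int n * of_real x) * \<xi> (x - of_int m * h)) UNIV"

definition op_minus :: "(real \<Rightarrow> complex) \<Rightarrow> real \<Rightarrow> complex" where
  "op_minus \<xi> x = of_real x * \<xi> x - vderiv \<xi> x"

definition op_plus :: "(real \<Rightarrow> complex) \<Rightarrow> real \<Rightarrow> complex" where
  "op_plus \<xi> x = of_real x * \<xi> x + vderiv \<xi> x"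

definition commD :: "real \<Rightarrow> (int \<Rightarrow> int \<Rightarrow> complex) \<Rightarrow> (real \<Rightarrow> complex) \<Rightarrow> (real \<Rightarrow> complex)
                      \<Rightarrow> (real \<Rightarrow> complex) \<times> (real \<Rightarrow> complex)" where
  "commD h c \<xi> \<eta> =
     ((\<lambda>x. pi_rep h c (op_minus \<eta>) x - op_minus (pi_rep h c \<eta>) x),
      (\<lambda>x. pi_rep h c (op_plus \<xi>) x - op_plus (pi_rep h c \<xi>) x))"

end

theory Submission imports Defs begin

definition gg :: "nat \<Rightarrow> int \<times> int" where "gg = from_nat_into UNIV"

lemma bij_gg: "bij_betw gg UNIV UNIV"
  unfolding gg_def by (rule bij_betw_from_nat_into) (auto simp: infinite_UNIV_int finite_prod)

lemma infsum_gg: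
  fixes F :: "int \<times> int \<Rightarrow> complex"
  assumes "summable (\<lambda>j. norm (F (gg j)))"
  shows "(\<lambda>j. F (gg j)) sums infsum F UNIV" "infsum F UNIV = (\<Sum>j. F (gg j))"
proof -
  have s: "(\<lambda>j. F (gg j)) sums (\<Sum>j. F (gg j))"
    using summable_norm_cancel[OF assms] by (rule summable_sums)
  have "((\<lambda>j. F (gg j)) has_sum (\<Sum>j. F (gg j))) UNIV"
    by (rule norm_summable_imp_has_sum[OF assms s])
  hence "infsum (\<lambda>j. F (gg j)) UNIV = (\<Sum>j. F (gg j))" by (rule infsumI)
  moreover have "infsum (\<lambda>j. F (gg j)) UNIV = infsum F UNIV"
    by (rule infsum_reindex_bij_betw[OF bij_gg])
  ultimately show "infsum F UNIV = (\<Sum>j. F (gg j))" by simp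
  with s show "(\<lambda>j. F (gg j)) sums infsum F UNIV" by simp
qed

definition cc :: "(int \<Rightarrow> int \<Rightarrow> complex) \<Rightarrow> nat \<Rightarrow> complex" where
  "cc c j = c (fst (gg j)) (snd (gg j))"
definition nn :: "nat \<Rightarrow> real" where "nn j = real_of_int (fst (gg j))"
definition mm :: "nat \<Rightarrow> real" where "mm j = real_of_int (snd (gg j))"

lemma rd_nat:
  assumes "rapid_decay c"
  shows "summable (\<lambda>j. norm (cc c j) * (1 + (nn j)^2 + (mm j)^2) ^ k)"
proof -
  have "(\<lambda>(n, m). norm (c n m) * (1 + (real_of_int n)^2 + (real_of_int m)^2) ^ k) summable_on UNIV"
    using assms unfolding rapid_decay_def by blast
  hence "(\<lambda>j. (\<lambda>(n, m). norm (c n m) * (1 + (real_of_int n)^2 + (real_of_int m)^2) ^ k) (gg j)) summable_on UNIV"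
    by (subst summable_on_reindex_bij_betw[OF bij_gg])
  hence "summable (\<lambda>j. (\<lambda>(n, m). norm (c n m) * (1 + (real_of_int n)^2 + (real_of_int m)^2) ^ k) (gg j))"
    by (rule summable_on_imp_summable)
  thus ?thesis by (simp add: cc_def nn_def mm_def case_prod_beta)
qed

lemma exp_vd: "((\<lambda>x::real. exp ((a::complex) * of_real x)) has_vector_derivative (a * exp(a * of_real x))) (at x)"
proof -
  have "((\<lambda>z. exp (a * z)) has_field_derivative (a * exp(a * of_real x))) (at (of_real x))"
    by (auto intro!: derivative_eq_intros)
  thus ?thesis by (rule has_vector_derivative_real_field)
qed

lemma shift_vd:
  fixes \<eta> :: "real \<Rightarrow> complex"
  assumes "(\<eta> has_vector_derivative d) (at (x - y))" 
  shows "((\<lambda>x. \<eta> (x - y)) has_vector_derivative d) (at x)"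
proof -
  have "((\<lambda>x. x - y) has_vector_derivative 1) (at x)"
    by (auto intro!: derivative_eq_intros)
  from vector_diff_chain_at[OF this] assms show ?thesis by (simp add: o_def)
qed

lemma schwartz_facts:
  assumes "schwartz \<eta>"
  shows "\<And>x. (\<eta> has_vector_derivative vderiv \<eta> x) (at x)"
    and "continuous_on UNIV \<eta>" and "continuous_on UNIV (vderiv \<eta>)"
    and "\<exists>B. \<forall>x. norm (\<eta> x) \<le> B"
    and "\<exists>B. \<forall>x. \<bar>x\<bar> * norm (\<eta> x) \<le> B"
    and "\<exists>B. \<forall>x. norm (vderiv \<eta> x) \<le> B"
proof -
  have d0: "\<And>x. \<eta> differentiable (at x)" and d1: "\<And>x. vderiv \<eta> differentiable (at x)"
    using assms unfolding schwartz_def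
    by (metis funpow_0, metis funpow_0 funpow_Suc_right o_apply)
  show vd: "\<And>x. (\<eta> has_vector_derivative vderiv \<eta> x) (at x)"
    using d0 by (simp add: vderiv_def vector_derivative_works[symmetric])
  show "continuous_on UNIV \<eta>"
    using vd continuous_on_vector_derivative by blast
  show "continuous_on UNIV (vderiv \<eta>)"
    using d1 by (simp add: continuous_at_imp_continuous_on differentiable_imp_continuous_within)
  have b: "\<And>k n. bounded (range (\<lambda>x. (complex_of_real x) ^ k * (vderiv ^^ n) \<eta> x))"
    using assms unfolding schwartz_def by blast
  show "\<exists>B. \<forall>x. norm (\<eta> x) \<le> B"
    using b[of 0 0] by (auto simp: bounded_iff)
  show "\<exists>B. \<forall>x. norm (vderiv \<eta> x) \<le> B"
    using b[of 0 1] by (auto simp: bounded_iff)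
  show "\<exists>B. \<forall>x. \<bar>x\<bar> * norm (\<eta> x) \<le> B"
    using b[of 1 0] by (auto simp: bounded_iff norm_mult)
qed

definition en :: "nat \<Rightarrow> real \<Rightarrow> complex" where
  "en j x = exp (2 * of_real pi * \<i> * of_int (fst (gg j)) * of_real x)"

lemma norm_en[simp]: "norm (en j x) = 1"
  by (simp add: en_def norm_exp_eq_Re)

lemma en_vd: "(en j has_vector_derivative (2 * of_real pi * \<i> * of_real (nn j) * en j x)) (at x)"
  using exp_vd[of "2 * of_real pi * \<i> * of_int (fst (gg j))" x]
  unfolding en_def[abs_def] nn_def by simp

lemma abs_le_aux: "\<bar>a::real\<bar> \<le> 1 + a^2 + b^2"
proof (cases "\<bar>a\<bar> \<le> 1")
  case True then show ?thesis by (smt (verit) zero_le_power2)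
next
  case False
  have "\<bar>a\<bar> * 1 \<le> \<bar>a\<bar> * \<bar>a\<bar>" by (rule mult_left_mono) (use False in auto)
  hence "\<bar>a\<bar> \<le> \<bar>a\<bar> * \<bar>a\<bar>" by simp
  also have "\<dots> = a^2" by (simp add: power2_eq_square abs_mult_self_eq)
  finally show ?thesis by (smt (verit) zero_le_power2)
qed

lemma rd_bounds:
  assumes "rapid_decay c"
  shows "summable (\<lambda>j. norm (cc c j))" "summable (\<lambda>j. norm (cc c j) * \<bar>nn j\<bar>)"
    "summable (\<lambda>j. norm (cc c j) * \<bar>mm j\<bar>)"
proof -
  show "summable (\<lambda>j. norm (cc c j))" using rd_nat[OF assms, of 0] by simp
  have s1: "summable (\<lambda>j. norm (cc c j) * (1 + (nn j)^2 + (mm j)^2))" using rd_nat[OF assms, of 1] by simp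
  show "summable (\<lambda>j. norm (cc c j) * \<bar>nn j\<bar>)"
    by (rule summable_comparison_test'[OF s1]) (auto intro!: mult_left_mono abs_le_aux)
  show "summable (\<lambda>j. norm (cc c j) * \<bar>mm j\<bar>)"
    by (rule summable_comparison_test'[OF s1])
       (auto intro!: mult_left_mono, metis abs_le_aux add.assoc add.commute)
qed

lemma pi_nat:
  assumes rd: "rapid_decay c" and B: "\<And>y. norm (\<xi> y) \<le> B"
  shows "summable (\<lambda>j. norm (cc c j * en j x * \<xi> (x - mm j * h)))"
    and "(\<lambda>j. cc c j * en j x * \<xi> (x - mm j * h)) sums pi_rep h c \<xi> x"
proof -
  show s: "summable (\<lambda>j. norm (cc c j * en j x * \<xi> (x - mm j * h)))"
  proof (rule summable_comparison_test'[OF summable_mult2[OF rd_bounds(1)[OF rd], of B]])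
    fix j show "norm (norm (cc c j * en j x * \<xi> (x - mm j * h))) \<le> norm (cc c j) * B"
      by (simp add: norm_mult mult_left_mono B)
  qed
  define F where "F = (\<lambda>(n, m). c n m * exp (2 * of_real pi * \<i> * of_int n * of_real x) * \<xi> (x - of_int m * h))"
  have F: "F (gg j) = cc c j * en j x * \<xi> (x - mm j * h)" for j
    by (simp add: F_def case_prod_beta cc_def en_def mm_def)
  have "pi_rep h c \<xi> x = infsum F UNIV" by (simp add: pi_rep_def F_def)
  with infsum_gg(1)[of F] s show "(\<lambda>j. cc c j * en j x * \<xi> (x - mm j * h)) sums pi_rep h c \<xi> x"
    by (simp add: F)
qed

definition Td :: "real \<Rightarrow> (int \<Rightarrow> int \<Rightarrow> complex) \<Rightarrow> (real \<Rightarrow> complex) \<Rightarrow> nat \<Rightarrow> real \<Rightarrow> complex" where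
  "Td h c \<eta> j x = cc c j * (2 * of_real pi * \<i> * of_real (nn j) * en j x * \<eta> (x - mm j * h)
                     + en j x * vderiv \<eta> (x - mm j * h))"

lemma pi_deriv:
  assumes rd: "rapid_decay c" and sch: "schwartz \<eta>"
  shows "summable (\<lambda>j. norm (Td h c \<eta> j x))"
    and "(pi_rep h c \<eta> has_vector_derivative (\<Sum>j. Td h c \<eta> j x)) (at x)"
proof -
  obtain B0 where B0: "\<And>y. norm (\<eta> y) \<le> B0" using schwartz_facts(4)[OF sch] by blast
  obtain D0 where D0: "\<And>y. norm (vderiv \<eta> y) \<le> D0" using schwartz_facts(6)[OF sch] by blast
  define M where "M j = (2*pi*B0) * (norm (cc c j) * \<bar>nn j\<bar>) + D0 * norm (cc c j)" for j
  have sM: "summable M" unfolding M_def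
    by (intro summable_add summable_mult rd_bounds[OF rd])
  have nM: "norm (Td h c \<eta> j y) \<le> M j" for j y
  proof -
    have "norm (2 * of_real pi * \<i> * of_real (nn j) * en j y * \<eta> (y - mm j * h)
                     + en j y * vderiv \<eta> (y - mm j * h))
       \<le> norm (2 * of_real pi * \<i> * of_real (nn j) * en j y * \<eta> (y - mm j * h))
          + norm (en j y * vderiv \<eta> (y - mm j * h))" by (rule norm_triangle_ineq)
    also have "\<dots> = 2 * pi * \<bar>nn j\<bar> * norm (\<eta> (y - mm j * h)) + norm (vderiv \<eta> (y - mm j * h))"
      by (simp add: norm_mult)
    also have "\<dots> \<le> 2 * pi * \<bar>nn j\<bar> * B0 + D0"
      by (intro add_mono mult_left_mono B0 D0) auto
    finally have "norm (Td h c \<eta> j y) \<le> norm (cc c j) * (2 * pi * \<bar>nn j\<bar> * B0 + D0)"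
      unfolding Td_def norm_mult by (intro mult_left_mono) auto
    thus ?thesis by (simp add: M_def algebra_simps)
  qed
  show "summable (\<lambda>j. norm (Td h c \<eta> j x))"
    by (rule summable_comparison_test'[OF sM]) (simp add: nM)
  have ul: "uniform_limit UNIV (\<lambda>n x. \<Sum>i<n. Td h c \<eta> i x) (\<lambda>x. suminf (\<lambda>i. Td h c \<eta> i x)) sequentially"
    by (rule Weierstrass_m_test[OF _ sM]) (simp add: nM)
  define T where "T j y = cc c j * en j y * \<eta> (y - mm j * h)" for j y
  have Tvd: "(T j has_vector_derivative Td h c \<eta> j y) (at y)" for j y
  proof -
    have "((\<lambda>y. cc c j * en j y * \<eta> (y - mm j * h)) has_vector_derivative
       (cc c j * en j y * vderiv \<eta> (y - mm j * h) + cc c j * (2 * of_real pi * \<i> * of_real (nn j) * en j y) * \<eta> (y - mm j * h))) (at y)"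
      by (intro has_vector_derivative_mult has_vector_derivative_mult_right en_vd shift_vd schwartz_facts(1)[OF sch])
    thus ?thesis unfolding T_def[abs_def] Td_def by (simp add: algebra_simps)
  qed
  have "\<exists>g. \<forall>x\<in>UNIV. (\<lambda>n. T n x) sums (g x) \<and> (g has_derivative (\<lambda>t. t *\<^sub>R (\<Sum>j. Td h c \<eta> j x))) (at x within UNIV)"
  proof (rule has_derivative_series[where f' = "\<lambda>j x t. t *\<^sub>R Td h c \<eta> j x"])
    show "convex (UNIV :: real set)" by simp
    show "\<And>n x. x \<in> UNIV \<Longrightarrow> (T n has_derivative (\<lambda>t. t *\<^sub>R Td h c \<eta> n x)) (at x within UNIV)"
      using Tvd by (simp add: has_vector_derivative_def)
    show "(0::real) \<in> UNIV" by simp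
    show "(\<lambda>n. T n 0) sums pi_rep h c \<eta> 0" unfolding T_def by (rule pi_nat(2)[OF rd B0])
    fix e :: real assume e: "e > 0"
    show "\<forall>\<^sub>F n in sequentially. \<forall>x\<in>UNIV. \<forall>t. norm ((\<Sum>i<n. t *\<^sub>R Td h c \<eta> i x) - t *\<^sub>R (\<Sum>j. Td h c \<eta> j x)) \<le> e * norm t"
      using uniform_limitD[OF ul e]
    proof eventually_elim
      case (elim n)
      show ?case
      proof (intro ballI allI)
        fix x t
        assume "x \<in> (UNIV :: real set)"
        with elim have d: "norm ((\<Sum>i<n. Td h c \<eta> i x) - (\<Sum>j. Td h c \<eta> j x)) \<le> e"
          by (auto simp: dist_norm less_imp_le)
        have "norm ((\<Sum>i<n. t *\<^sub>R Td h c \<eta> i x) - t *\<^sub>R (\<Sum>j. Td h c \<eta> j x))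
            = \<bar>t\<bar> * norm ((\<Sum>i<n. Td h c \<eta> i x) - (\<Sum>j. Td h c \<eta> j x))"
          by (simp add: scaleR_sum_right[symmetric] scaleR_diff_right[symmetric])
        also have "\<dots> \<le> \<bar>t\<bar> * e" by (intro mult_left_mono d) auto
        finally show "norm ((\<Sum>i<n. t *\<^sub>R Td h c \<eta> i x) - t *\<^sub>R (\<Sum>j. Td h c \<eta> j x)) \<le> e * norm t"
          by (simp add: mult.commute)
      qed
    qed
  qed
  then obtain g where g: "\<And>x. (\<lambda>n. T n x) sums (g x)"
     "\<And>x. (g has_derivative (\<lambda>t. t *\<^sub>R (\<Sum>j. Td h c \<eta> j x))) (at x)" by auto
  have "g = pi_rep h c \<eta>"
  proof
    fix y show "g y = pi_rep h c \<eta> y"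
      using g(1)[of y] pi_nat(2)[OF rd B0, where x=y] unfolding T_def by (rule sums_unique2)
  qed
  with g(2) show "(pi_rep h c \<eta> has_vector_derivative (\<Sum>j. Td h c \<eta> j x)) (at x)"
    by (simp add: has_vector_derivative_def)
qed

definition dd :: "real \<Rightarrow> (int \<Rightarrow> int \<Rightarrow> complex) \<Rightarrow> complex \<Rightarrow> nat \<Rightarrow> complex" where
  "dd h c s j = cc c j * (- of_real (mm j * h) - s * (2 * of_real pi * \<i> * of_real (nn j)))"

lemma comm_formula:
  assumes rd: "rapid_decay c" and sch: "schwartz \<eta>"
  shows "(\<lambda>j. dd h c s j * en j x * \<eta> (x - mm j * h)) sums
     (pi_rep h c (\<lambda>y. of_real y * \<eta> y + s * vderiv \<eta> y) x
       - (of_real x * pi_rep h c \<eta> x + s * vderiv (pi_rep h c \<eta>) x))"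
proof -
  obtain B0 where B0: "\<And>y. norm (\<eta> y) \<le> B0" using schwartz_facts(4)[OF sch] by blast
  obtain B1 where B1: "\<And>y. \<bar>y\<bar> * norm (\<eta> y) \<le> B1" using schwartz_facts(5)[OF sch] by blast
  obtain D0 where D0: "\<And>y. norm (vderiv \<eta> y) \<le> D0" using schwartz_facts(6)[OF sch] by blast
  have Bop: "norm (of_real y * \<eta> y + s * vderiv \<eta> y) \<le> B1 + norm s * D0" for y
  proof -
    have "norm (of_real y * \<eta> y + s * vderiv \<eta> y) \<le> norm (of_real y * \<eta> y) + norm (s * vderiv \<eta> y)"
      by (rule norm_triangle_ineq)
    also have "\<dots> \<le> B1 + norm s * D0"
      using B1[of y] D0[of y] by (intro add_mono) (auto simp: norm_mult intro: mult_left_mono)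
    finally show ?thesis .
  qed
  have S1: "(\<lambda>j. cc c j * en j x * (of_real (x - mm j * h) * \<eta> (x - mm j * h) + s * vderiv \<eta> (x - mm j * h)))
      sums pi_rep h c (\<lambda>y. of_real y * \<eta> y + s * vderiv \<eta> y) x"
    using pi_nat(2)[where \<xi> = "\<lambda>y. of_real y * \<eta> y + s * vderiv \<eta> y", OF rd Bop] by simp
  have S2: "(\<lambda>j. of_real x * (cc c j * en j x * \<eta> (x - mm j * h))) sums (of_real x * pi_rep h c \<eta> x)"
    by (rule sums_mult[OF pi_nat(2)[OF rd B0]])
  have "vderiv (pi_rep h c \<eta>) x = (\<Sum>j. Td h c \<eta> j x)"
    unfolding vderiv_def by (rule vector_derivative_at[OF pi_deriv(2)[OF rd sch]])
  moreover have "(\<lambda>j. Td h c \<eta> j x) sums (\<Sum>j. Td h c \<eta> j x)"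
    by (rule summable_sums[OF summable_norm_cancel[OF pi_deriv(1)[OF rd sch]]])
  ultimately have S3: "(\<lambda>j. s * Td h c \<eta> j x) sums (s * vderiv (pi_rep h c \<eta>) x)"
    by (simp add: sums_mult)
  have S: "(\<lambda>j. cc c j * en j x * (of_real (x - mm j * h) * \<eta> (x - mm j * h) + s * vderiv \<eta> (x - mm j * h))
     - (of_real x * (cc c j * en j x * \<eta> (x - mm j * h)) + s * Td h c \<eta> j x)) sums
     (pi_rep h c (\<lambda>y. of_real y * \<eta> y + s * vderiv \<eta> y) x
       - (of_real x * pi_rep h c \<eta> x + s * vderiv (pi_rep h c \<eta>) x))"
    by (intro sums_diff sums_add S1 S2 S3)
  have "(\<lambda>j. cc c j * en j x * (of_real (x - mm j * h) * \<eta> (x - mm j * h) + s * vderiv \<eta> (x - mm j * h))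
     - (of_real x * (cc c j * en j x * \<eta> (x - mm j * h)) + s * Td h c \<eta> j x))
    = (\<lambda>j. dd h c s j * en j x * \<eta> (x - mm j * h))"
    by (rule ext) (simp add: Td_def dd_def algebra_simps)
  with S show ?thesis by simp
qed

lemma CS_series:
  fixes w a :: "nat \<Rightarrow> real"
  assumes w0: "\<And>j. w j \<ge> 0" and a0: "\<And>j. a j \<ge> 0"
    and sw: "summable w" and swa: "summable (\<lambda>j. w j * a j)" and swa2: "summable (\<lambda>j. w j * (a j)^2)"
  shows "(\<Sum>j. w j * a j)^2 \<le> (\<Sum>j. w j) * (\<Sum>j. w j * (a j)^2)"
proof -
  have le: "(\<Sum>j. w j * a j) \<le> sqrt (\<Sum>j. w j) * sqrt (\<Sum>j. w j * (a j)^2)"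
  proof (rule suminf_le_const[OF swa])
    fix n
    have "(\<Sum>j<n. w j * a j) = (\<Sum>j<n. \<bar>sqrt (w j)\<bar> * \<bar>sqrt (w j) * a j\<bar>)"
    proof (intro sum.cong refl)
      fix j
      have "\<bar>sqrt (w j)\<bar> * \<bar>sqrt (w j) * a j\<bar> = (sqrt (w j) * sqrt (w j)) * a j"
        using w0[of j] a0[of j] by (simp add: abs_mult)
      also have "\<dots> = w j * a j" using w0[of j] by simp
      finally show "w j * a j = \<bar>sqrt (w j)\<bar> * \<bar>sqrt (w j) * a j\<bar>" by simp
    qed
    also have "\<dots> \<le> L2_set (\<lambda>j. sqrt (w j)) {..<n} * L2_set (\<lambda>j. sqrt (w j) * a j) {..<n}"
      by (rule L2_set_mult_ineq)
    also have "\<dots> = sqrt (\<Sum>j<n. w j) * sqrt (\<Sum>j<n. w j * (a j)^2)"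
      using w0 by (simp add: L2_set_def power_mult_distrib)
    also have "\<dots> \<le> sqrt (\<Sum>j. w j) * sqrt (\<Sum>j. w j * (a j)^2)"
      using w0 a0 by (intro mult_mono real_sqrt_le_mono sum_le_suminf sw swa2 real_sqrt_ge_zero suminf_nonneg sum_nonneg mult_nonneg_nonneg) auto
    finally show "(\<Sum>j<n. w j * a j) \<le> sqrt (\<Sum>j. w j) * sqrt (\<Sum>j. w j * (a j)^2)" .
  qed
  have "0 \<le> (\<Sum>j. w j * a j)" using w0 a0 by (intro suminf_nonneg swa) auto
  hence "(\<Sum>j. w j * a j)^2 \<le> (sqrt (\<Sum>j. w j) * sqrt (\<Sum>j. w j * (a j)^2))^2"
    using le by (intro power_mono) auto
  also have "\<dots> = (\<Sum>j. w j) * (\<Sum>j. w j * (a j)^2)"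
    using w0 a0 by (simp add: power_mult_distrib suminf_nonneg sw swa2)
  finally show ?thesis .
qed

definition ww :: "real \<Rightarrow> (int \<Rightarrow> int \<Rightarrow> complex) \<Rightarrow> nat \<Rightarrow> real" where
  "ww h c j = norm (cc c j) * (\<bar>mm j\<bar> * \<bar>h\<bar> + 2 * pi * \<bar>nn j\<bar>)"

lemma ww_facts:
  assumes rd: "rapid_decay c"
  shows "\<And>j. ww h c j \<ge> 0" "summable (ww h c)" "\<And>j. norm s = 1 \<Longrightarrow> norm (dd h c s j) \<le> ww h c j"
proof -
  show "\<And>j. ww h c j \<ge> 0" by (simp add: ww_def)
  have "summable (\<lambda>j. \<bar>h\<bar> * (norm (cc c j) * \<bar>mm j\<bar>) + (2 * pi) * (norm (cc c j) * \<bar>nn j\<bar>))"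
    by (intro summable_add summable_mult rd_bounds[OF rd])
  thus "summable (ww h c)" unfolding ww_def[abs_def] by (simp add: algebra_simps)
  fix j assume s: "norm s = 1"
  have "norm (- of_real (mm j * h) - s * (2 * of_real pi * \<i> * of_real (nn j)))
     \<le> norm (of_real (mm j * h) :: complex) + norm (s * (2 * of_real pi * \<i> * of_real (nn j)))"
    by (metis norm_minus_cancel norm_triangle_ineq4)
  also have "\<dots> = \<bar>mm j\<bar> * \<bar>h\<bar> + 2 * pi * \<bar>nn j\<bar>"
    using s by (simp add: norm_mult abs_mult)
  finally show "norm (dd h c s j) \<le> ww h c j"
    unfolding dd_def ww_def norm_mult by (intro mult_left_mono) auto
qed

lemma L2_bound:
  fixes h :: real and s :: complex and \<eta> :: "real \<Rightarrow> complex"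
  assumes rd: "rapid_decay c" and sch: "schwartz \<eta>" and s: "norm s = 1"
  defines "\<Phi> \<equiv> \<lambda>x. \<Sum>j. dd h c s j * en j x * \<eta> (x - mm j * h)"
  shows "\<Phi> \<in> borel_measurable lborel"
    and "(\<integral>\<^sup>+x. ennreal ((cmod (\<Phi> x))^2) \<partial>lborel)
           \<le> ennreal ((suminf (ww h c))^2) * (\<integral>\<^sup>+x. ennreal ((cmod (\<eta> x))^2) \<partial>lborel)"
proof -
  obtain B0 where B0: "\<And>y. norm (\<eta> y) \<le> B0" using schwartz_facts(4)[OF sch] by blast
  have B0pos: "0 \<le> B0" by (rule order_trans[OF norm_ge_zero B0[of 0]])
  have etam[measurable]: "\<eta> \<in> borel_measurable borel"
    by (rule borel_measurable_continuous_onI[OF schwartz_facts(2)[OF sch]])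
  define w where "w = ww h c"
  define W where "W = suminf w"
  have w0: "\<And>j. w j \<ge> 0" and sw: "summable w" and dw: "\<And>j. norm (dd h c s j) \<le> w j"
    using ww_facts[OF rd] s unfolding w_def by auto
  have W0: "W \<ge> 0" unfolding W_def using w0 sw by (intro suminf_nonneg) auto
  define t where "t j x = dd h c s j * en j x * \<eta> (x - mm j * h)" for j x
  define a where "a j x = norm (\<eta> (x - mm j * h))" for j x
  have a0: "a j x \<ge> 0" for j x by (simp add: a_def)
  have ta: "norm (t j x) \<le> w j * a j x" for j x
    unfolding t_def a_def norm_mult using dw[of j] by (simp add: mult_right_mono)
  have swB: "summable (\<lambda>j. w j * B0)" using sw by (rule summable_mult2)
  have swa: "summable (\<lambda>j. w j * a j x)" for x
    by (rule summable_comparison_test'[OF swB]) (use w0 B0 in \<open>auto simp: a_def intro: mult_left_mono\<close>)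
  have wa2: "norm (w j * (a j x)^2) \<le> w j * B0 * B0" for j x
  proof -
    have "(a j x)^2 \<le> B0^2" by (intro power_mono) (auto simp: a_def B0)
    from mult_left_mono[OF this w0[of j]] show ?thesis
      using w0[of j] by (simp add: power2_eq_square mult.assoc)
  qed
  have swa2: "summable (\<lambda>j. w j * (a j x)^2)" for x
    by (rule summable_comparison_test'[OF summable_mult2[OF swB, of B0]]) (rule wa2)
  have st: "summable (\<lambda>j. norm (t j x))" for x
    by (rule summable_comparison_test'[OF swa[of x]]) (simp add: ta)
  have tcont: "continuous_on UNIV (t j)" for j
  proof -
    have "continuous_on UNIV (en j)"
      using en_vd by (intro continuous_on_vector_derivative) auto
    moreover have "continuous_on UNIV (\<lambda>x. \<eta> (x - mm j * h))"
      by (rule continuous_on_compose2[OF schwartz_facts(2)[OF sch]]) (auto intro!: continuous_intros)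
    ultimately show ?thesis unfolding t_def[abs_def] by (intro continuous_intros) auto
  qed
  have tm[measurable]: "t j \<in> borel_measurable borel" for j
    by (rule borel_measurable_continuous_onI[OF tcont])
  have Phi: "\<Phi> = (\<lambda>x. \<Sum>j. t j x)" by (simp add: \<Phi>_def t_def)
  show "\<Phi> \<in> borel_measurable lborel"
    unfolding Phi measurable_lborel2
  proof (rule borel_measurable_LIMSEQ_metric[where f = "\<lambda>n x. \<Sum>j<n. t j x"])
    show "\<And>n. (\<lambda>x. \<Sum>j<n. t j x) \<in> borel_measurable borel" by measurable
    show "\<And>x. x \<in> space borel \<Longrightarrow> (\<lambda>n. \<Sum>j<n. t j x) \<longlonglongrightarrow> (\<Sum>j. t j x)"
      by (rule summable_LIMSEQ[OF summable_norm_cancel[OF st]])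
  qed
  have pw: "(cmod (\<Phi> x))^2 \<le> W * (\<Sum>j. w j * (a j x)^2)" for x
  proof -
    have "cmod (\<Phi> x) \<le> (\<Sum>j. norm (t j x))" unfolding Phi by (rule summable_norm[OF st])
    also have "\<dots> \<le> (\<Sum>j. w j * a j x)" by (rule suminf_le[OF ta st swa])
    finally have "(cmod (\<Phi> x))^2 \<le> (\<Sum>j. w j * a j x)^2" by (intro power_mono) auto
    also have "\<dots> \<le> W * (\<Sum>j. w j * (a j x)^2)" unfolding W_def
      by (rule CS_series[OF w0 a0 sw swa swa2])
    finally show ?thesis .
  qed
  have am[measurable]: "(\<lambda>x. a j x) \<in> borel_measurable borel" for j unfolding a_def by measurable
  have transl: "(\<integral>\<^sup>+x. ennreal ((a j x)^2) \<partial>lborel) = (\<integral>\<^sup>+x. ennreal ((cmod (\<eta> x))^2) \<partial>lborel)" for j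
  proof -
    have "(\<integral>\<^sup>+x. ennreal ((cmod (\<eta> x))^2) \<partial>lborel) = ennreal \<bar>1::real\<bar> * (\<integral>\<^sup>+x. ennreal ((cmod (\<eta> (- (mm j * h) + 1 * x)))^2) \<partial>lborel)"
      by (rule nn_integral_real_affine) auto
    thus ?thesis by (simp add: a_def)
  qed
  have "(\<integral>\<^sup>+x. ennreal ((cmod (\<Phi> x))^2) \<partial>lborel) \<le> (\<integral>\<^sup>+x. ennreal (W * (\<Sum>j. w j * (a j x)^2)) \<partial>lborel)"
    by (intro nn_integral_mono ennreal_leI pw)
  also have "\<dots> = (\<integral>\<^sup>+x. ennreal W * (\<Sum>j. ennreal (w j * (a j x)^2)) \<partial>lborel)"
  proof (rule nn_integral_cong)
    fix x
    have Q0: "0 \<le> (\<Sum>j. w j * (a j x)^2)" using w0 swa2 by (intro suminf_nonneg) auto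
    have e: "ennreal (\<Sum>j. w j * (a j x)^2) = (\<Sum>j. ennreal (w j * (a j x)^2))"
      using w0 swa2 by (intro suminf_ennreal2[symmetric]) auto
    show "ennreal (W * (\<Sum>j. w j * (a j x)^2)) = ennreal W * (\<Sum>j. ennreal (w j * (a j x)^2))"
      unfolding ennreal_mult[OF W0 Q0] e by (rule refl)
  qed
  also have "\<dots> = ennreal W * (\<integral>\<^sup>+x. (\<Sum>j. ennreal (w j * (a j x)^2)) \<partial>lborel)"
    by (rule nn_integral_cmult) measurable
  also have "(\<integral>\<^sup>+x. (\<Sum>j. ennreal (w j * (a j x)^2)) \<partial>lborel) = (\<Sum>j. \<integral>\<^sup>+x. ennreal (w j * (a j x)^2) \<partial>lborel)"
    by (rule nn_integral_suminf) measurable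
  also have "\<dots> = (\<Sum>j. ennreal (w j) * (\<integral>\<^sup>+x. ennreal ((cmod (\<eta> x))^2) \<partial>lborel))"
  proof (rule suminf_cong)
    fix j
    have "(\<integral>\<^sup>+x. ennreal (w j * (a j x)^2) \<partial>lborel) = (\<integral>\<^sup>+x. ennreal (w j) * ennreal ((a j x)^2) \<partial>lborel)"
      using w0 by (simp add: ennreal_mult)
    also have "\<dots> = ennreal (w j) * (\<integral>\<^sup>+x. ennreal ((a j x)^2) \<partial>lborel)"
      by (rule nn_integral_cmult) measurable
    finally show "(\<integral>\<^sup>+x. ennreal (w j * (a j x)^2) \<partial>lborel) = ennreal (w j) * (\<integral>\<^sup>+x. ennreal ((cmod (\<eta> x))^2) \<partial>lborel)"
      by (simp add: transl)
  qed
  also have "\<dots> = ennreal W * (\<integral>\<^sup>+x. ennreal ((cmod (\<eta> x))^2) \<partial>lborel)"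
    using w0 sw by (simp add: W_def suminf_ennreal2)
  finally show "(\<integral>\<^sup>+x. ennreal ((cmod (\<Phi> x))^2) \<partial>lborel)
           \<le> ennreal ((suminf (ww h c))^2) * (\<integral>\<^sup>+x. ennreal ((cmod (\<eta> x))^2) \<partial>lborel)"
    using W0 by (simp add: W_def[symmetric] w_def[symmetric] power2_eq_square ennreal_mult mult.assoc)
qed

lemma comm_fst:
  assumes rd: "rapid_decay c" and sch: "schwartz \<eta>"
  shows "fst (commD h c \<xi> \<eta>) = (\<lambda>x. \<Sum>j. dd h c (-1) j * en j x * \<eta> (x - mm j * h))"
proof
  fix x
  have "op_minus \<eta> = (\<lambda>y. of_real y * \<eta> y + (-1) * vderiv \<eta> y)"
    by (simp add: op_minus_def[abs_def])
  thus "fst (commD h c \<xi> \<eta>) x = (\<Sum>j. dd h c (-1) j * en j x * \<eta> (x - mm j * h))"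
    using sums_unique[OF comm_formula[OF rd sch, of h "-1" x]]
    by (simp add: commD_def op_minus_def)
qed

lemma comm_snd:
  assumes rd: "rapid_decay c" and sch: "schwartz \<xi>"
  shows "snd (commD h c \<xi> \<eta>) = (\<lambda>x. \<Sum>j. dd h c 1 j * en j x * \<xi> (x - mm j * h))"
proof
  fix x
  have "op_plus \<xi> = (\<lambda>y. of_real y * \<xi> y + 1 * vderiv \<xi> y)"
    by (simp add: op_plus_def[abs_def])
  thus "snd (commD h c \<xi> \<eta>) x = (\<Sum>j. dd h c 1 j * en j x * \<xi> (x - mm j * h))"
    using sums_unique[OF comm_formula[OF rd sch, of h 1 x]]
    by (simp add: commD_def op_plus_def)
qed

theorem mainTheorem1:
  fixes h :: real and c :: "int \<Rightarrow> int \<Rightarrow> complex"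
  assumes "rapid_decay c"
  shows "\<exists>C\<ge>0. \<forall>\<xi> \<eta>. schwartz \<xi> \<longrightarrow> schwartz \<eta> \<longrightarrow>
           fst (commD h c \<xi> \<eta>) \<in> borel_measurable lborel \<and>
           snd (commD h c \<xi> \<eta>) \<in> borel_measurable lborel \<and>
           (\<integral>\<^sup>+ x. ennreal ((cmod (fst (commD h c \<xi> \<eta>) x))^2 + (cmod (snd (commD h c \<xi> \<eta>) x))^2) \<partial>lborel)
             \<le> ennreal C * (\<integral>\<^sup>+ x. ennreal ((cmod (\<xi> x))^2 + (cmod (\<eta> x))^2) \<partial>lborel)"
proof (intro exI conjI allI impI)
  define C where "C = (suminf (ww h c))^2"
  show "C \<ge> 0" by (simp add: C_def)
  fix \<xi> \<eta> :: "real \<Rightarrow> complex"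
  assume sx: "schwartz \<xi>" and se: "schwartz \<eta>"
  have L1: "fst (commD h c \<xi> \<eta>) \<in> borel_measurable lborel"
     "(\<integral>\<^sup>+x. ennreal ((cmod (fst (commD h c \<xi> \<eta>) x))^2) \<partial>lborel)
           \<le> ennreal C * (\<integral>\<^sup>+x. ennreal ((cmod (\<eta> x))^2) \<partial>lborel)"
    unfolding comm_fst[OF assms se] C_def using L2_bound[OF assms se, of "-1" h] by auto
  have L2: "snd (commD h c \<xi> \<eta>) \<in> borel_measurable lborel"
     "(\<integral>\<^sup>+x. ennreal ((cmod (snd (commD h c \<xi> \<eta>) x))^2) \<partial>lborel)
           \<le> ennreal C * (\<integral>\<^sup>+x. ennreal ((cmod (\<xi> x))^2) \<partial>lborel)"
    unfolding comm_snd[OF assms sx] C_def using L2_bound[OF assms sx, of 1 h] by auto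
  show "fst (commD h c \<xi> \<eta>) \<in> borel_measurable lborel" by (rule L1(1))
  show "snd (commD h c \<xi> \<eta>) \<in> borel_measurable lborel" by (rule L2(1))
  have xm[measurable]: "\<xi> \<in> borel_measurable lborel"
    using borel_measurable_continuous_onI[OF schwartz_facts(2)[OF sx]] by simp
  have em[measurable]: "\<eta> \<in> borel_measurable lborel"
    using borel_measurable_continuous_onI[OF schwartz_facts(2)[OF se]] by simp
  have fm[measurable]: "fst (commD h c \<xi> \<eta>) \<in> borel_measurable lborel" by (rule L1(1))
  have sm[measurable]: "snd (commD h c \<xi> \<eta>) \<in> borel_measurable lborel" by (rule L2(1))
  have "(\<integral>\<^sup>+ x. ennreal ((cmod (fst (commD h c \<xi> \<eta>) x))^2 + (cmod (snd (commD h c \<xi> \<eta>) x))^2) \<partial>lborel)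
     = (\<integral>\<^sup>+x. ennreal ((cmod (fst (commD h c \<xi> \<eta>) x))^2) \<partial>lborel)
       + (\<integral>\<^sup>+x. ennreal ((cmod (snd (commD h c \<xi> \<eta>) x))^2) \<partial>lborel)"
    by (subst nn_integral_add[symmetric]) (auto simp: ennreal_plus)
  also have "\<dots> \<le> ennreal C * (\<integral>\<^sup>+x. ennreal ((cmod (\<eta> x))^2) \<partial>lborel)
                 + ennreal C * (\<integral>\<^sup>+x. ennreal ((cmod (\<xi> x))^2) \<partial>lborel)"
    by (rule add_mono[OF L1(2) L2(2)])
  also have "\<dots> = ennreal C * ((\<integral>\<^sup>+x. ennreal ((cmod (\<xi> x))^2) \<partial>lborel) + (\<integral>\<^sup>+x. ennreal ((cmod (\<eta> x))^2) \<partial>lborel))"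
    by (simp add: distrib_left add.commute)
  also have "(\<integral>\<^sup>+x. ennreal ((cmod (\<xi> x))^2) \<partial>lborel) + (\<integral>\<^sup>+x. ennreal ((cmod (\<eta> x))^2) \<partial>lborel)
     = (\<integral>\<^sup>+ x. ennreal ((cmod (\<xi> x))^2 + (cmod (\<eta> x))^2) \<partial>lborel)"
    by (subst nn_integral_add[symmetric]) (auto simp: ennreal_plus)
  finally show "(\<integral>\<^sup>+ x. ennreal ((cmod (fst (commD h c \<xi> \<eta>) x))^2 + (cmod (snd (commD h c \<xi> \<eta>) x))^2) \<partial>lborel)
             \<le> ennreal C * (\<integral>\<^sup>+ x. ennreal ((cmod (\<xi> x))^2 + (cmod (\<eta> x))^2) \<partial>lborel)" .
qed

end
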